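(* Let $R$ be a commutative ring endowed with a translation-invariant partial order $\le$ on its additive group, and assume that $R$ is archimedean and localizable. Then $n\cdot 1\in\mathrm{Loc}(R)$ for every $n\in\mathbb{N}$.
   Context: Rings are commutative with unit $1$; $\mathbb{N}=\{1,2,\dots\}$. Translation-invariant means $r\le s$ implies $r+t\le s+t$; $R^+=\{r:0\le r\}$. $R$ is archimedean if whenever $g,h\in R$ satisfy $kg+h\in R^+$ for all $k\in\mathbb{N}$, then $g\in R^+$. $\mathrm{Loc}(R)$ is the set of $s\in 1+R^+$ such that for all $r\in R$, $rs\in R^+$ implies $r\in R^+$. $R$ is localizable if for every $r\in R$ there exists $s\in\mathrm{Loc}(R)$ with $-s\le r\le s$. *)

theory Defs
  imports Main
begin

definition transl_inv_porder :: "('a::comm_ring_1 \<Rightarrow> 'a \<Rightarrow> bool) \<Rightarrow> bool" where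
  "transl_inv_porder le \<longleftrightarrow>
     (\<forall>r. le r r) \<and>
     (\<forall>r s. le r s \<and> le s r \<longrightarrow> r = s) \<and>
     (\<forall>r s t. le r s \<and> le s t \<longrightarrow> le r t) \<and>
     (\<forall>r s t. le r s \<longrightarrow> le (r + t) (s + t))"

definition pos_cone :: "('a::comm_ring_1 \<Rightarrow> 'a \<Rightarrow> bool) \<Rightarrow> 'a set" where
  "pos_cone le = {r. le 0 r}"

definition archimedean_ord :: "('a::comm_ring_1 \<Rightarrow> 'a \<Rightarrow> bool) \<Rightarrow> bool" where
  "archimedean_ord le \<longleftrightarrow>
     (\<forall>g h. (\<forall>k::nat. k \<ge> 1 \<longrightarrow> of_nat k * g + h \<in> pos_cone le) \<longrightarrow> g \<in> pos_cone le)"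

definition Loc :: "('a::comm_ring_1 \<Rightarrow> 'a \<Rightarrow> bool) \<Rightarrow> 'a set" where
  "Loc le = {s. s \<in> (\<lambda>r. 1 + r) ` pos_cone le \<and>
                (\<forall>r. r * s \<in> pos_cone le \<longrightarrow> r \<in> pos_cone le)}"

definition localizable :: "('a::comm_ring_1 \<Rightarrow> 'a \<Rightarrow> bool) \<Rightarrow> bool" where
  "localizable le \<longleftrightarrow> (\<forall>r. \<exists>s \<in> Loc le. le (- s) r \<and> le r s)"

end

theory Submission
  imports Defs
begin

lemma cone_add:
  assumes "transl_inv_porder le" "a \<in> pos_cone le" "b \<in> pos_cone le"
  shows "a + b \<in> pos_cone le"
proof -
  have tr: "\<forall>r s t. le r s \<and> le s t \<longrightarrow> le r t" and tl: "\<forall>r s t. le r s \<longrightarrow> le (r + t) (s + t)"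
    using assms(1) unfolding transl_inv_porder_def by blast+
  have a: "le 0 a" and b: "le 0 b" using assms(2,3) unfolding pos_cone_def by auto
  have "le (0 + b) (a + b)" using tl a by blast
  hence "le b (a + b)" by simp
  hence "le 0 (a + b)" using tr b by blast
  thus ?thesis unfolding pos_cone_def by simp
qed

lemma cone_nat:
  assumes "transl_inv_porder le" "a \<in> pos_cone le"
  shows "of_nat m * a \<in> pos_cone le"
proof (induction m)
  case 0
  have "le 0 0" using assms(1) unfolding transl_inv_porder_def by blast
  then show ?case unfolding pos_cone_def by simp
next
  case (Suc m)
  have "of_nat (Suc m) * a = a + of_nat m * a" by (simp add: algebra_simps)
  then show ?case using cone_add[OF assms(1) assms(2) Suc] by simp
qed

lemma le_cone:
  assumes "transl_inv_porder le" "le x y"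
  shows "y - x \<in> pos_cone le"
proof -
  have tl: "\<forall>r s t. le r s \<longrightarrow> le (r + t) (s + t)"
    using assms(1) unfolding transl_inv_porder_def by blast
  have "le (x + -x) (y + -x)" using tl assms(2) by blast
  then show ?thesis unfolding pos_cone_def by simp
qed

theorem lemma3:
  fixes le :: "'a::comm_ring_1 \<Rightarrow> 'a \<Rightarrow> bool"
  assumes "transl_inv_porder le"
    and "archimedean_ord le"
    and "localizable le"
    and "n \<ge> (1::nat)"
  shows "(of_nat n :: 'a) \<in> Loc le"
proof -
  note T = assms(1)
  have sC: "s \<in> pos_cone le" if sL: "s \<in> Loc le" for s
  proof -
    obtain p where p: "p \<in> pos_cone le" "s = 1 + p" using sL unfolding Loc_def by blast
    obtain s0 where s0: "s0 \<in> Loc le" "le (- s0) 0" "le 0 s0"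
      using assms(3) unfolding localizable_def by blast
    have "1 * s0 \<in> pos_cone le" using s0(3) unfolding pos_cone_def by simp
    hence one: "1 \<in> pos_cone le" using s0(1) unfolding Loc_def by blast
    show ?thesis using cone_add[OF T one p(1)] p(2) by simp
  qed
  obtain s0 where s0: "s0 \<in> Loc le"
    using assms(3) unfolding localizable_def by blast
  have one: "1 \<in> pos_cone le"
  proof -
    have "1 * s0 \<in> pos_cone le" using sC[OF s0] by simp
    thus ?thesis using s0 unfolding Loc_def by blast
  qed
  have n1: "(of_nat n :: 'a) = 1 + of_nat (n - 1) * 1"
    using assms(4) by (simp add: of_nat_diff)
  have part1: "(of_nat n :: 'a) \<in> (\<lambda>r. 1 + r) ` pos_cone le"
    using n1 cone_nat[OF T one, of "n - 1"] by (metis image_eqI)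
  have part2: "r \<in> pos_cone le" if rn: "r * of_nat n \<in> pos_cone le" for r
  proof -
    obtain s where s: "s \<in> Loc le" "le (- s) r"
      using assms(3) unfolding localizable_def by blast
    have sc: "s \<in> pos_cone le" using sC[OF s(1)] .
    have rs: "r + s \<in> pos_cone le" using le_cone[OF T s(2)] by simp
    have "of_nat k * r + of_nat n * s \<in> pos_cone le" if "k \<ge> 1" for k :: nat
    proof -
      define q where "q = k div n"
      define j where "j = k mod n"
      have jn: "j \<le> n" using assms(4) unfolding j_def by (simp add: less_imp_le)
      have k: "k = q * n + j" unfolding q_def j_def by simp
      have nn: "(of_nat n :: 'a) = of_nat j + of_nat (n - j)" using jn
        by (metis le_add_diff_inverse of_nat_add)
      have eq: "of_nat k * r + of_nat n * s =
          of_nat q * (r * of_nat n) + (of_nat j * (r + s) + of_nat (n - j) * s)"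
      proof -
        have kk: "(of_nat k :: 'a) = of_nat q * of_nat n + of_nat j"
          by (subst k) simp
        have ns: "(of_nat n :: 'a) * s = of_nat j * s + of_nat (n - j) * s"
          using nn by (simp add: distrib_right)
        show ?thesis unfolding kk ns by (simp add: algebra_simps)
      qed
      show ?thesis unfolding eq
        by (intro cone_add[OF T] cone_nat[OF T] rn rs sc)
    qed
    thus ?thesis using assms(2) unfolding archimedean_ord_def by blast
  qed
  show ?thesis unfolding Loc_def using part1 part2 by blast
qed

end
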